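(* Let $S$ be a memory system satisfying the Causality assumption, let $n,m,v\ge1$, and let $\Omega$ be a witness for $S(n,m,v)$. For every unambiguous trace $\tau$ of $S(n,m,v)$, every location $1\le i\le m$, and all $r,s,t\in L(\tau,i)$: if $\langle r,s\rangle\in\Omega^e(\tau,i)$, then $\langle r,t\rangle\in\Omega^e(\tau,i)$ or $\langle t,s\rangle\in\Omega^e(\tau,i)$.
   Context: Notation: $\mathbb{N}_n=\{1,\dots,n\}$, $\mathbb{W}_n=\{0,\dots,n\}$. Memory events $E(n,m,v)=\{R,W\}\times\mathbb{N}_n\times\mathbb{N}_m\times\mathbb{W}_v$; for $e=\langle a,b,c,d\rangle$, $op(e)=a$, $proc(e)=b$, $loc(e)=c$, $data(e)=d$; $0$ models the initial value of every location. A memory system is a family $S=(S(n,m,v))_{n,m,v\ge1}$, $S(n,m,v)$ a regular set of finite runs over an alphabet $E^a(n,m,v)\supseteq E(n,m,v)$ (other letters are internal events). The trace of a run is its subsequence of memory events; traces of $S(n,m,v)$ are traces of its runs. For a sequence $\tau$ of memory events: $L(\tau,j)=\{k: loc(\tau(k))=j\}$, $L^w(\tau,j)=\{k\in L(\tau,j): op(\tau(k))=W\}$, $L^r(\tau,j)=\{k\in L(\tau,j): op(\tau(k))=R\}$. A trace $\tau$ is unambiguous if for every location $j$ and $x\in L^w(\tau,j)$, $data(\tau(x))\ne0$ and $data(\tau(x))\ne data(\tau(y))$ for all $y\in L^w(\tau,j)\setminus\{x\}$. Causality assumption: for all $n,m,v\ge1$, every trace $\tau$ of $S(n,m,v)$,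 every location $j$ and every $x\in L^r(\tau,j)$, either $data(\tau(x))=0$ or there is $y\in L^w(\tau,j)$ with $data(\tau(x))=data(\tau(y))$. A witness $\Omega$ for $S(n,m,v)$ assigns to every trace $\tau$ of $S(n,m,v)$ and location $j$ a strict total order $\Omega(\tau,j)$ on $L^w(\tau,j)$. For an unambiguous trace $\tau$, the relation $\Omega^e(\tau,j)\subseteq L(\tau,j)\times L(\tau,j)$ is defined by: $\langle x,y\rangle\in\Omega^e(\tau,j)$ iff (1) $data(\tau(x))=data(\tau(y))$, $op(\tau(x))=W$ and $op(\tau(y))=R$; or (2) $data(\tau(x))=0$ and $data(\tau(y))\ne0$; or (3) there are $a,b\in L^w(\tau,j)$ with $\langle a,b\rangle\in\Omega(\tau,j)$, $data(\tau(a))=data(\tau(x))$ and $data(\tau(b))=data(\tau(y))$. *)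

theory Defs
  imports Main
begin

datatype mop = R | W

type_synonym mevent = "mop \<times> nat \<times> nat \<times> nat"

definition op :: "mevent \<Rightarrow> mop" where "op e = fst e"
definition proc :: "mevent \<Rightarrow> nat" where "proc e = fst (snd e)"
definition loc :: "mevent \<Rightarrow> nat" where "loc e = fst (snd (snd e))"
definition data :: "mevent \<Rightarrow> nat" where "data e = snd (snd (snd e))"

definition E :: "nat \<Rightarrow> nat \<Rightarrow> nat \<Rightarrow> mevent set" where
  "E n m v = UNIV \<times> {1..n} \<times> {1..m} \<times> {0..v}"

text \<open>Runs are words over E^a(n,m,v) = E(n,m,v) plus internal events (Inr letters).\<close>
definition Ea :: "(nat \<Rightarrow> nat \<Rightarrow> nat \<Rightarrow> 'i set) \<Rightarrow> nat \<Rightarrow> nat \<Rightarrow> nat \<Rightarrow> (mevent + 'i) set" where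
  "Ea Iev n m v = Inl ` E n m v \<union> Inr ` Iev n m v"

definition regular_on :: "'a set \<Rightarrow> 'a list set \<Rightarrow> bool" where
  "regular_on A L \<longleftrightarrow> finite A \<and> (\<exists>(Q::nat set) q0 \<delta> F. finite Q \<and> q0 \<in> Q \<and> F \<subseteq> Q \<and>
     (\<forall>q\<in>Q. \<forall>a\<in>A. \<delta> q a \<in> Q) \<and>
     L = {w. set w \<subseteq> A \<and> fold (\<lambda>a q. \<delta> q a) w q0 \<in> F})"

definition memory_system ::
  "(nat \<Rightarrow> nat \<Rightarrow> nat \<Rightarrow> 'i set) \<Rightarrow> (nat \<Rightarrow> nat \<Rightarrow> nat \<Rightarrow> (mevent + 'i) list set) \<Rightarrow> bool" where
  "memory_system Iev S \<longleftrightarrow>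
     (\<forall>n m v. n \<ge> 1 \<and> m \<ge> 1 \<and> v \<ge> 1 \<longrightarrow> regular_on (Ea Iev n m v) (S n m v))"

definition trace :: "(mevent + 'i) list \<Rightarrow> mevent list" where
  "trace r = map projl (filter isl r)"

definition traces :: "(nat \<Rightarrow> nat \<Rightarrow> nat \<Rightarrow> (mevent + 'i) list set) \<Rightarrow> nat \<Rightarrow> nat \<Rightarrow> nat \<Rightarrow> mevent list set" where
  "traces S n m v = trace ` S n m v"

text \<open>Positions are 0-based list indices.\<close>
definition Lset :: "mevent list \<Rightarrow> nat \<Rightarrow> nat set" where
  "Lset \<tau> j = {k. k < length \<tau> \<and> loc (\<tau> ! k) = j}"
definition Lw :: "mevent list \<Rightarrow> nat \<Rightarrow> nat set" where
  "Lw \<tau> j = {k \<in> Lset \<tau> j. op (\<tau> ! k) = W}"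
definition Lr :: "mevent list \<Rightarrow> nat \<Rightarrow> nat set" where
  "Lr \<tau> j = {k \<in> Lset \<tau> j. op (\<tau> ! k) = R}"

definition unambiguous :: "mevent list \<Rightarrow> bool" where
  "unambiguous \<tau> \<longleftrightarrow> (\<forall>j. \<forall>x \<in> Lw \<tau> j. data (\<tau> ! x) \<noteq> 0 \<and>
      (\<forall>y \<in> Lw \<tau> j - {x}. data (\<tau> ! x) \<noteq> data (\<tau> ! y)))"

definition causality :: "(nat \<Rightarrow> nat \<Rightarrow> nat \<Rightarrow> (mevent + 'i) list set) \<Rightarrow> bool" where
  "causality S \<longleftrightarrow> (\<forall>n m v. n \<ge> 1 \<and> m \<ge> 1 \<and> v \<ge> 1 \<longrightarrow>
     (\<forall>\<tau> \<in> traces S n m v. \<forall>j. \<forall>x \<in> Lr \<tau> j.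
        data (\<tau> ! x) = 0 \<or> (\<exists>y \<in> Lw \<tau> j. data (\<tau> ! x) = data (\<tau> ! y))))"

definition witness ::
  "(nat \<Rightarrow> nat \<Rightarrow> nat \<Rightarrow> (mevent + 'i) list set) \<Rightarrow> nat \<Rightarrow> nat \<Rightarrow> nat \<Rightarrow>
   (mevent list \<Rightarrow> nat \<Rightarrow> (nat \<times> nat) set) \<Rightarrow> bool" where
  "witness S n m v \<Omega> \<longleftrightarrow> (\<forall>\<tau> \<in> traces S n m v. \<forall>j \<in> {1..m}.
      \<Omega> \<tau> j \<subseteq> Lw \<tau> j \<times> Lw \<tau> j \<and> strict_linear_order_on (Lw \<tau> j) (\<Omega> \<tau> j))"

definition Omega_e :: "(mevent list \<Rightarrow> nat \<Rightarrow> (nat \<times> nat) set) \<Rightarrow> mevent list \<Rightarrow> nat \<Rightarrow> (nat \<times> nat) set" where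
  "Omega_e \<Omega> \<tau> j = {(x, y). x \<in> Lset \<tau> j \<and> y \<in> Lset \<tau> j \<and>
     ((data (\<tau> ! x) = data (\<tau> ! y) \<and> op (\<tau> ! x) = W \<and> op (\<tau> ! y) = R) \<or>
      (data (\<tau> ! x) = 0 \<and> data (\<tau> ! y) \<noteq> 0) \<or>
      (\<exists>a \<in> Lw \<tau> j. \<exists>b \<in> Lw \<tau> j. (a, b) \<in> \<Omega> \<tau> j \<and>
          data (\<tau> ! a) = data (\<tau> ! x) \<and> data (\<tau> ! b) = data (\<tau> ! y)))}"

end

theory Submission
  imports Defs
begin

theorem lemma5p1:
  fixes Iev :: "nat \<Rightarrow> nat \<Rightarrow> nat \<Rightarrow> 'i set"
    and S :: "nat \<Rightarrow> nat \<Rightarrow> nat \<Rightarrow> (mevent + 'i) list set"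
  assumes "memory_system Iev S"
    and "causality S"
    and "n \<ge> 1" "m \<ge> 1" "v \<ge> 1"
    and "witness S n m v \<Omega>"
    and "\<tau> \<in> traces S n m v" "unambiguous \<tau>"
    and "i \<in> {1..m}"
    and "r \<in> Lset \<tau> i" "s \<in> Lset \<tau> i" "t \<in> Lset \<tau> i"
    and "(r, s) \<in> Omega_e \<Omega> \<tau> i"
  shows "(r, t) \<in> Omega_e \<Omega> \<tau> i \<or> (t, s) \<in> Omega_e \<Omega> \<tau> i"
proof -
  define d where "d x = data (\<tau> ! x)" for x
  have so: "strict_linear_order_on (Lw \<tau> i) (\<Omega> \<tau> i)"
    using assms(6,7,9) unfolding witness_def by blast
  hence tr: "trans (\<Omega> \<tau> i)" and tot: "total_on (Lw \<tau> i) (\<Omega> \<tau> i)"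
    unfolding strict_linear_order_on_def by auto
  have ex: "\<exists>w \<in> Lw \<tau> i. d w = d x" if "x \<in> Lset \<tau> i" "d x \<noteq> 0" for x
  proof (cases "op (\<tau> ! x)")
    case R
    then have "x \<in> Lr \<tau> i" using that unfolding Lr_def by simp
    have c: "\<forall>\<tau> \<in> traces S n m v. \<forall>j. \<forall>x \<in> Lr \<tau> j.
        data (\<tau> ! x) = 0 \<or> (\<exists>y \<in> Lw \<tau> j. data (\<tau> ! x) = data (\<tau> ! y))"
      using assms(2,3,4,5) unfolding causality_def by blast
    have "data (\<tau> ! x) = 0 \<or> (\<exists>y \<in> Lw \<tau> i. data (\<tau> ! x) = data (\<tau> ! y))"
      using c assms(7) \<open>x \<in> Lr \<tau> i\<close> by blast
    then show ?thesis using that(2) unfolding d_def by auto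
  next
    case W
    then show ?thesis using that unfolding Lw_def by auto
  qed
  have nz: "d w \<noteq> 0" if "w \<in> Lw \<tau> i" for w
    using assms(8) that unfolding unambiguous_def d_def by blast
  have uq: "w1 = w2" if "w1 \<in> Lw \<tau> i" "w2 \<in> Lw \<tau> i" "d w1 = d w2" for w1 w2
    using assms(8) that unfolding unambiguous_def d_def by blast
  have E: "(x, y) \<in> Omega_e \<Omega> \<tau> i \<longleftrightarrow> x \<in> Lset \<tau> i \<and> y \<in> Lset \<tau> i \<and>
     ((d x = d y \<and> x \<in> Lw \<tau> i \<and> op (\<tau> ! y) = R) \<or>
      (d x = 0 \<and> d y \<noteq> 0) \<or>
      (\<exists>a \<in> Lw \<tau> i. \<exists>b \<in> Lw \<tau> i. (a, b) \<in> \<Omega> \<tau> i \<and> d a = d x \<and> d b = d y))" for x y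
    unfolding Omega_e_def d_def Lw_def by auto
  from assms(13) have rs: "(d r = d s \<and> r \<in> Lw \<tau> i \<and> op (\<tau> ! s) = R) \<or>
      (d r = 0 \<and> d s \<noteq> 0) \<or>
      (\<exists>a \<in> Lw \<tau> i. \<exists>b \<in> Lw \<tau> i. (a, b) \<in> \<Omega> \<tau> i \<and> d a = d r \<and> d b = d s)"
    using E by blast
  note L = assms(10,11,12)
  show ?thesis
  proof (cases "d t = 0")
    case True
    have "d s \<noteq> 0" using rs nz by (metis (no_types))
    then have "(t, s) \<in> Omega_e \<Omega> \<tau> i" unfolding E using L True by blast
    then show ?thesis ..
  next
    case tnz: False
    then obtain w where w: "w \<in> Lw \<tau> i" "d w = d t" using ex L by blast
    from rs show ?thesis
    proof (elim disjE conjE bexE)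
      assume 1: "d r = d s" "r \<in> Lw \<tau> i" "op (\<tau> ! s) = R"
      show ?thesis
      proof (cases "w = r")
        case True
        show ?thesis
        proof (cases "op (\<tau> ! t)")
          case R
          have "d r = d t" using True w by simp
          then have "(r, t) \<in> Omega_e \<Omega> \<tau> i" unfolding E using L 1 R by blast
          then show ?thesis ..
        next
          case W then have "t \<in> Lw \<tau> i" using L unfolding Lw_def by simp
          then have "t = r" using uq w True by metis
          then show ?thesis using assms(13) by simp
        qed
      next
        case False
        then have "(r, w) \<in> \<Omega> \<tau> i \<or> (w, r) \<in> \<Omega> \<tau> i" using tot 1 w unfolding total_on_def by blast
        then show ?thesis
        proof
          assume "(r, w) \<in> \<Omega> \<tau> i"
          then have "(r, t) \<in> Omega_e \<Omega> \<tau> i" unfolding E using L 1 w by blast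
          then show ?thesis ..
        next
          assume "(w, r) \<in> \<Omega> \<tau> i"
          then have "(t, s) \<in> Omega_e \<Omega> \<tau> i" unfolding E using L 1 w by blast
          then show ?thesis ..
        qed
      qed
    next
      assume "d r = 0" "d s \<noteq> 0"
      then have "(r, t) \<in> Omega_e \<Omega> \<tau> i" unfolding E using L tnz by blast
      then show ?thesis ..
    next
      fix a b assume ab: "a \<in> Lw \<tau> i" "b \<in> Lw \<tau> i" "(a, b) \<in> \<Omega> \<tau> i" "d a = d r" "d b = d s"
      have "(a, w) \<in> \<Omega> \<tau> i \<or> (w, b) \<in> \<Omega> \<tau> i"
      proof (cases "w = a")
        case True then show ?thesis using ab by simp
      next
        case False
        then have "(a, w) \<in> \<Omega> \<tau> i \<or> (w, a) \<in> \<Omega> \<tau> i" using tot ab w unfolding total_on_def by blast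
        then show ?thesis using tr ab unfolding trans_def by blast
      qed
      then show ?thesis
      proof
        assume "(a, w) \<in> \<Omega> \<tau> i"
        then have "(r, t) \<in> Omega_e \<Omega> \<tau> i" unfolding E using L ab w by blast
        then show ?thesis ..
      next
        assume "(w, b) \<in> \<Omega> \<tau> i"
        then have "(t, s) \<in> Omega_e \<Omega> \<tau> i" unfolding E using L ab w by blast
        then show ?thesis ..
      qed
    qed
  qed
qed

end
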